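(* For the finite-alphabet channel $P_{Y|X_1,X_2}$ and metric $q$, $\mathcal R_{LM}\subseteq\mathcal R^{bin}_{cog}$, where $\mathcal R_{LM}$ is the closure of the convex hull of the union over $P_{X_1},P_{X_2}$ of the sets of $(R_1,R_2)$ satisfying $R_1<\min_{f\in\mathcal D_{(1)}}[I_f(X_1;Y|X_2)+I_f(X_1;X_2)]$, $R_2<\min_{f\in\mathcal D_{(2)}}[I_f(X_2;Y|X_1)+I_f(X_1;X_2)]$, $R_1+R_2<\min_{f\in\mathcal D_{(0)}}[I_f(X_1,X_2;Y)+I_f(X_1;X_2)]$, with $P_{X_1,X_2,Y}=P_{X_1}P_{X_2}P_{Y|X_1,X_2}$ and $\mathcal D_{(1)}=\{f: f_{X_1}=P_{X_1}, f_{X_2,Y}=P_{X_2,Y},\mathbb E_f q\ge\mathbb E_P q\}$, $\mathcal D_{(2)}=\{f: f_{X_2}=P_{X_2}, f_{X_1,Y}=P_{X_1,Y},\mathbb E_f q\ge\mathbb E_P q\}$, $\mathcal D_{(0)}=\{f: f_{X_1}=P_{X_1}, f_{X_2}=P_{X_2}, f_Y=P_Y,\mathbb E_f q\ge\mathbb E_P q, I_f(X_1;Y)\le R_1, I_f(X_2;Y)\le R_2\}$; and $\mathcal R^{bin}_{cog}$ is the closure of the convex hull of $\bigcup_P\mathcal R^{bin,*}_{cog}(P)$ over all $P=P_{X_1,X_2}P_{Y|X_1,X_2}$, $\mathcal R^{bin,*}_{cog}(P)$ being the set of $(R_1,R_2)$ for which there exist $R_{1,a},R_{1,b}\ge0$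 with $R_1=R_{1,a}+R_{1,b}$, $R_{1,a}\le R_1'(P)$, $R_{1,b}+R_2\le R_2'(P)$, and either $R_{1,a}\le R_1''(P,R_{1,b}+R_2)$ or $R_{1,b}+R_2\le R_2''(P,R_{1,a})$.
   Context: All distributions $f$ are on $\mathcal X_1\times\mathcal X_2\times\mathcal Y$ (finite), $q:\mathcal X_1\times\mathcal X_2\times\mathcal Y\to\mathbb R$, expectations $\mathbb E_f q=\mathbb E_f q(X_1,X_2,Y)$. For a distribution $Q$: $\mathcal G_q(Q)=\{f: f_{X_1,X_2}=Q_{X_1,X_2},\ \mathbb E_f q\ge\mathbb E_Q q\}$; $\mathcal L_1(Q)=\{f\in\mathcal G_q(Q):f_{X_2,Y}=Q_{X_2,Y}\}$; $\mathcal L_2(Q)=\{f\in\mathcal G_q(Q):f_{X_1,Y}=Q_{X_1,Y}\}$; $\mathcal L_0(Q)=\{f\in\mathcal G_q(Q):f_Y=Q_Y\}$. $R_1'(P)=\min_{\tilde P\in\mathcal L_1(P)}I_{\tilde P}(X_1;Y,X_2)$; $R_2'(P)=\min_{\tilde P\in\mathcal L_2(P)}I_{\tilde P}(X_2;Y|X_1)$; $R_1''(P,R_2)=\min_{\tilde P\in\mathcal L_0(P)}[I_{\tilde P}(X_1;Y)+|I_{\tilde P}(X_2;Y|X_1)-R_2|^+]$; $R_2''(P,R_1)=\min_{\tilde P\in\mathcal L_0(P)}[I_{\tilde P}(X_2;Y)-I_{\tilde P}(X_2;X_1)+|I_{\tilde P}(X_1;Y,X_2)-R_1|^+]$; $|t|^+=\max\{0,t\}$.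 *)

theory Defs
  imports "HOL-Analysis.Analysis"
begin

text \<open>Finite alphabets are the finite types 'a (X1), 'b (X2), 'c (Y).
  A joint distribution f on X1 x X2 x Y is a function 'a => 'b => 'c => real.
  Information quantities use the natural logarithm.\<close>

definition pmf1 :: "('u::finite \<Rightarrow> real) \<Rightarrow> bool" where
  "pmf1 p \<longleftrightarrow> (\<forall>u. 0 \<le> p u) \<and> (\<Sum>u\<in>UNIV. p u) = 1"

definition pmf2 :: "('u::finite \<Rightarrow> 'v::finite \<Rightarrow> real) \<Rightarrow> bool" where
  "pmf2 p \<longleftrightarrow> (\<forall>u v. 0 \<le> p u v) \<and> (\<Sum>u\<in>UNIV. \<Sum>v\<in>UNIV. p u v) = 1"

definition pmf3 :: "('a::finite \<Rightarrow> 'b::finite \<Rightarrow> 'c::finite \<Rightarrow> real) \<Rightarrow> bool" where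
  "pmf3 f \<longleftrightarrow> (\<forall>x1 x2 y. 0 \<le> f x1 x2 y) \<and> (\<Sum>x1\<in>UNIV. \<Sum>x2\<in>UNIV. \<Sum>y\<in>UNIV. f x1 x2 y) = 1"

definition channel :: "('a::finite \<Rightarrow> 'b::finite \<Rightarrow> 'c::finite \<Rightarrow> real) \<Rightarrow> bool" where
  "channel W \<longleftrightarrow> (\<forall>x1 x2. pmf1 (W x1 x2))"

definition m12 :: "('a::finite \<Rightarrow> 'b::finite \<Rightarrow> 'c::finite \<Rightarrow> real) \<Rightarrow> 'a \<Rightarrow> 'b \<Rightarrow> real" where
  "m12 f x1 x2 = (\<Sum>y\<in>UNIV. f x1 x2 y)"
definition m1Y :: "('a::finite \<Rightarrow> 'b::finite \<Rightarrow> 'c::finite \<Rightarrow> real) \<Rightarrow> 'a \<Rightarrow> 'c \<Rightarrow> real" where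
  "m1Y f x1 y = (\<Sum>x2\<in>UNIV. f x1 x2 y)"
definition m2Y :: "('a::finite \<Rightarrow> 'b::finite \<Rightarrow> 'c::finite \<Rightarrow> real) \<Rightarrow> 'b \<Rightarrow> 'c \<Rightarrow> real" where
  "m2Y f x2 y = (\<Sum>x1\<in>UNIV. f x1 x2 y)"
definition m1 :: "('a::finite \<Rightarrow> 'b::finite \<Rightarrow> 'c::finite \<Rightarrow> real) \<Rightarrow> 'a \<Rightarrow> real" where
  "m1 f x1 = (\<Sum>x2\<in>UNIV. \<Sum>y\<in>UNIV. f x1 x2 y)"
definition m2 :: "('a::finite \<Rightarrow> 'b::finite \<Rightarrow> 'c::finite \<Rightarrow> real) \<Rightarrow> 'b \<Rightarrow> real" where
  "m2 f x2 = (\<Sum>x1\<in>UNIV. \<Sum>y\<in>UNIV. f x1 x2 y)"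
definition mY :: "('a::finite \<Rightarrow> 'b::finite \<Rightarrow> 'c::finite \<Rightarrow> real) \<Rightarrow> 'c \<Rightarrow> real" where
  "mY f y = (\<Sum>x1\<in>UNIV. \<Sum>x2\<in>UNIV. f x1 x2 y)"

definition Eq :: "('a::finite \<Rightarrow> 'b::finite \<Rightarrow> 'c::finite \<Rightarrow> real) \<Rightarrow> ('a \<Rightarrow> 'b \<Rightarrow> 'c \<Rightarrow> real) \<Rightarrow> real" where
  "Eq q f = (\<Sum>x1\<in>UNIV. \<Sum>x2\<in>UNIV. \<Sum>y\<in>UNIV. f x1 x2 y * q x1 x2 y)"

definition mi :: "('u::finite \<Rightarrow> 'v::finite \<Rightarrow> real) \<Rightarrow> real" where
  "mi p = (\<Sum>u\<in>UNIV. \<Sum>v\<in>UNIV. if p u v = 0 then 0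
      else p u v * ln (p u v / ((\<Sum>v'\<in>UNIV. p u v') * (\<Sum>u'\<in>UNIV. p u' v))))"

definition cmi :: "('u::finite \<Rightarrow> 'v::finite \<Rightarrow> 'w::finite \<Rightarrow> real) \<Rightarrow> real" where
  "cmi p = (\<Sum>u\<in>UNIV. \<Sum>v\<in>UNIV. \<Sum>w\<in>UNIV. if p u v w = 0 then 0
      else p u v w * ln (p u v w * (\<Sum>u'\<in>UNIV. \<Sum>v'\<in>UNIV. p u' v' w)
                          / ((\<Sum>v'\<in>UNIV. p u v' w) * (\<Sum>u'\<in>UNIV. p u' v w))))"

definition I_1Y_2 where "I_1Y_2 f = cmi (\<lambda>x1 y x2. f x1 x2 y)"
definition I_2Y_1 where "I_2Y_1 f = cmi (\<lambda>x2 y x1. f x1 x2 y)"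
definition I_12 where "I_12 f = mi (m12 f)"
definition I_21 where "I_21 f = mi (\<lambda>x2 x1. m12 f x1 x2)"
definition I_12_Y where "I_12_Y f = mi (\<lambda>u y. f (fst u) (snd u) y)"
definition I_1_Y2 where "I_1_Y2 f = mi (\<lambda>x1 v. f x1 (snd v) (fst v))"
definition I_1Y where "I_1Y f = mi (m1Y f)"
definition I_2Y where "I_2Y f = mi (m2Y f)"

definition Gq where
  "Gq q Q = {f. pmf3 f \<and> m12 f = m12 Q \<and> Eq q f \<ge> Eq q Q}"
definition L1 where "L1 q Q = {f \<in> Gq q Q. m2Y f = m2Y Q}"
definition L2 where "L2 q Q = {f \<in> Gq q Q. m1Y f = m1Y Q}"
definition L0 where "L0 q Q = {f \<in> Gq q Q. mY f = mY Q}"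

(* minima, taken as infima in ereal *)
definition R1' :: "_ \<Rightarrow> _ \<Rightarrow> ereal" where
  "R1' q P = (INF f\<in>L1 q P. ereal (I_1_Y2 f))"
definition R2' :: "_ \<Rightarrow> _ \<Rightarrow> ereal" where
  "R2' q P = (INF f\<in>L2 q P. ereal (I_2Y_1 f))"
definition R1'' :: "_ \<Rightarrow> _ \<Rightarrow> real \<Rightarrow> ereal" where
  "R1'' q P R2 = (INF f\<in>L0 q P. ereal (I_1Y f + max 0 (I_2Y_1 f - R2)))"
definition R2'' :: "_ \<Rightarrow> _ \<Rightarrow> real \<Rightarrow> ereal" where
  "R2'' q P R1 = (INF f\<in>L0 q P. ereal (I_2Y f - I_21 f + max 0 (I_1_Y2 f - R1)))"

definition Rcog_star :: "('a::finite \<Rightarrow> 'b::finite \<Rightarrow> 'c::finite \<Rightarrow> real) \<Rightarrow> ('a \<Rightarrow> 'b \<Rightarrow> 'c \<Rightarrow> real) \<Rightarrow> (real \<times> real) set" where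
  "Rcog_star q P = {(R1, R2). 0 \<le> R2 \<and> (\<exists>R1a R1b. 0 \<le> R1a \<and> 0 \<le> R1b \<and> R1 = R1a + R1b \<and>
      ereal R1a \<le> R1' q P \<and> ereal (R1b + R2) \<le> R2' q P \<and>
      (ereal R1a \<le> R1'' q P (R1b + R2) \<or> ereal (R1b + R2) \<le> R2'' q P R1a))}"

definition Rcog_bin :: "('a::finite \<Rightarrow> 'b::finite \<Rightarrow> 'c::finite \<Rightarrow> real) \<Rightarrow> ('a \<Rightarrow> 'b \<Rightarrow> 'c \<Rightarrow> real) \<Rightarrow> (real \<times> real) set" where
  "Rcog_bin q W = closure (convex hull (\<Union>{Rcog_star q P | P. \<exists>PX. pmf2 PX \<and>
      P = (\<lambda>x1 x2 y. PX x1 x2 * W x1 x2 y)}))"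

definition D1 where
  "D1 q P = {f. pmf3 f \<and> m1 f = m1 P \<and> m2Y f = m2Y P \<and> Eq q f \<ge> Eq q P}"
definition D2 where
  "D2 q P = {f. pmf3 f \<and> m2 f = m2 P \<and> m1Y f = m1Y P \<and> Eq q f \<ge> Eq q P}"
definition D0 where
  "D0 q P R1 R2 = {f. pmf3 f \<and> m1 f = m1 P \<and> m2 f = m2 P \<and> mY f = mY P \<and> Eq q f \<ge> Eq q P
      \<and> I_1Y f \<le> R1 \<and> I_2Y f \<le> R2}"

definition RLM_P :: "('a::finite \<Rightarrow> 'b::finite \<Rightarrow> 'c::finite \<Rightarrow> real) \<Rightarrow> ('a \<Rightarrow> 'b \<Rightarrow> 'c \<Rightarrow> real) \<Rightarrow> (real \<times> real) set" where
  "RLM_P q P = {(R1, R2). 0 \<le> R1 \<and> 0 \<le> R2 \<and>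
      ereal R1 < (INF f\<in>D1 q P. ereal (I_1Y_2 f + I_12 f)) \<and>
      ereal R2 < (INF f\<in>D2 q P. ereal (I_2Y_1 f + I_12 f)) \<and>
      ereal (R1 + R2) < (INF f\<in>D0 q P R1 R2. ereal (I_12_Y f + I_12 f))}"

definition RLM :: "('a::finite \<Rightarrow> 'b::finite \<Rightarrow> 'c::finite \<Rightarrow> real) \<Rightarrow> ('a \<Rightarrow> 'b \<Rightarrow> 'c \<Rightarrow> real) \<Rightarrow> (real \<times> real) set" where
  "RLM q W = closure (convex hull (\<Union>{RLM_P q P | P. \<exists>P1 P2. pmf1 P1 \<and> pmf1 P2 \<and>
      P = (\<lambda>x1 x2 y. P1 x1 * P2 x2 * W x1 x2 y)}))"

end

theory Submission
  imports Defs "HOL-Real_Asymp.Real_Asymp"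
begin



lemma xlnx_cont: "continuous_on {0..} (\<lambda>x::real. x * ln x)"
proof (rule continuous_on_eq_continuous_within[THEN iffD2], intro ballI)
  fix x :: real assume "x \<in> {0..}"
  show "continuous (at x within {0..}) (\<lambda>x. x * ln x)"
  proof (cases "x = 0")
    case True
    have "((\<lambda>x::real. x * ln x) \<longlongrightarrow> 0) (at_right 0)" by real_asymp
    then show ?thesis using True by (simp add: continuous_within at_within_Ici_at_right)
  next
    case False
    with \<open>x \<in> {0..}\<close> have "x > 0" by simp
    then have "isCont (\<lambda>x. x * ln x) x" by (intro continuous_intros) auto
    then show ?thesis by (simp add: continuous_at_imp_continuous_at_within)
  qed
qed

lemma gibbs_term:
  fixes a r :: real
  assumes "0 \<le> a" "0 \<le> r" "a > 0 \<Longrightarrow> r > 0"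
  shows "a - r \<le> a * ln (a / r)"
proof (cases "a = 0")
  case True then show ?thesis using assms by simp
next
  case False
  then have a: "a > 0" using assms by simp
  then have r: "r > 0" using assms by simp
  have "ln (r / a) \<le> r / a - 1" using a r by (intro ln_le_minus_one) simp
  moreover have "ln (a / r) = - ln (r / a)" using a r by (simp add: ln_div)
  ultimately have "ln (a / r) \<ge> 1 - r / a" by simp
  then have "a * ln (a / r) \<ge> a * (1 - r / a)" using a by (intro mult_left_mono) auto
  then show ?thesis using a by (simp add: algebra_simps)
qed

lemma conv_term:
  fixes a b c t :: real
  assumes "0 \<le> a" "0 \<le> b" "0 \<le> t" "t \<le> 1" "a > 0 \<Longrightarrow> c > 0" "b > 0 \<Longrightarrow> c > 0"
  shows "((1-t)*a + t*b) * ln (((1-t)*a + t*b) / c) \<le> (1-t) * (a * ln (a / c)) + t * (b * ln (b / c))"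
proof -
  define s where "s = (1-t)*a + t*b"
  have s0: "0 \<le> s" using assms by (simp add: s_def)
  show ?thesis
  proof (cases "s = 0")
    case True
    have nn: "0 \<le> (1-t)*a" "0 \<le> t*b" using assms by simp_all
    have "(1-t)*a = 0 \<and> t*b = 0" using True s_def add_nonneg_eq_0_iff[OF nn] by simp
    then have "(1-t)*a = 0" "t*b = 0" by simp_all
    then have "(1-t) * (a * ln (a / c)) = 0" "t * (b * ln (b / c)) = 0"
      by (simp_all add: mult.assoc[symmetric])
    moreover have "(1-t)*a + t*b = 0" using True s_def by simp
    ultimately show ?thesis by (simp only:)
  next
    case False
    then have sp: "s > 0" using s0 by simp
    have cp: "c > 0"
    proof (cases "a > 0")
      case True then show ?thesis using assms by simp
    next
      case False then have "a = 0" using assms by simp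
      then have "t*b > 0" using sp s_def by simp
      then have "b > 0" using assms by (auto simp: zero_less_mult_iff)
      then show ?thesis using assms by simp
    qed
    have split: "x * ln (x / c) = x * ln (x / s) + x * ln (s / c)" if "0 \<le> x" for x
    proof (cases "x = 0")
      case False
      then have "x > 0" using that by simp
      then have "ln (x / c) = ln (x / s) + ln (s / c)" using sp cp
        by (simp add: ln_div)
      then show ?thesis by (simp add: algebra_simps)
    qed simp
    have ga: "a - s \<le> a * ln (a / s)" using gibbs_term[of a s] assms sp by simp
    have gb: "b - s \<le> b * ln (b / s)" using gibbs_term[of b s] assms sp by simp
    have "(1-t) * (a * ln (a / c)) + t * (b * ln (b / c))
        = (1-t) * (a * ln (a / s)) + t * (b * ln (b / s)) + s * ln (s / c)"
      using split[of a] split[of b] assms by (simp add: s_def algebra_simps)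
    also have "\<dots> \<ge> (1-t) * (a - s) + t * (b - s) + s * ln (s / c)"
    proof -
      have "(1-t) * (a - s) \<le> (1-t) * (a * ln (a / s))" using ga assms by (intro mult_left_mono) auto
      moreover have "t * (b - s) \<le> t * (b * ln (b / s))" using gb assms by (intro mult_left_mono) auto
      ultimately show ?thesis by simp
    qed
    finally show ?thesis by (simp add: s_def algebra_simps)
  qed
qed




lemma if0_mult[simp]: "(if x = 0 then 0 else x * y) = (x * (y::real))" by simp

lemma mi_alt: "mi p = (\<Sum>u\<in>UNIV. \<Sum>v\<in>UNIV. p u v * ln (p u v / ((\<Sum>v'\<in>UNIV. p u v') * (\<Sum>u'\<in>UNIV. p u' v))))"
  unfolding mi_def by simp

lemma cmi_alt: "cmi p = (\<Sum>u\<in>UNIV. \<Sum>v\<in>UNIV. \<Sum>w\<in>UNIV. p u v w * ln (p u v w * (\<Sum>u'\<in>UNIV. \<Sum>v'\<in>UNIV. p u' v' w)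
                          / ((\<Sum>v'\<in>UNIV. p u v' w) * (\<Sum>u'\<in>UNIV. p u' v w))))"
  unfolding cmi_def by simp

lemma sumP: "(\<Sum>u::('a::finite\<times>'b::finite)\<in>UNIV. g u) = (\<Sum>x1\<in>UNIV. \<Sum>x2\<in>UNIV. g (x1, x2))"
  by (simp add: sum.cartesian_product UNIV_Times_UNIV[symmetric] del: UNIV_Times_UNIV)

lemma r132: "(\<Sum>x\<in>A. \<Sum>z\<in>C. \<Sum>y\<in>B. g x y z) = (\<Sum>x\<in>A. \<Sum>y\<in>B. \<Sum>z\<in>C. g x y z)"
  by (intro sum.cong refl) (rule sum.swap)
lemma r213: "(\<Sum>y\<in>B. \<Sum>x\<in>A. \<Sum>z\<in>C. g x y z) = (\<Sum>x\<in>A. \<Sum>y\<in>B. \<Sum>z\<in>C. g x y z)"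
  by (rule sum.swap)
lemma r231: "(\<Sum>y\<in>B. \<Sum>z\<in>C. \<Sum>x\<in>A. g x y z) = (\<Sum>x\<in>A. \<Sum>y\<in>B. \<Sum>z\<in>C. g x y z)"
proof -
  have "(\<Sum>y\<in>B. \<Sum>z\<in>C. \<Sum>x\<in>A. g x y z) = (\<Sum>y\<in>B. \<Sum>x\<in>A. \<Sum>z\<in>C. g x y z)"
    by (intro sum.cong refl) (rule sum.swap)
  also have "\<dots> = (\<Sum>x\<in>A. \<Sum>y\<in>B. \<Sum>z\<in>C. g x y z)" by (rule sum.swap)
  finally show ?thesis .
qed

context
  fixes f :: "'a::finite \<Rightarrow> 'b::finite \<Rightarrow> 'c::finite \<Rightarrow> real"
begin

lemma I12Y_form: "I_12_Y f = (\<Sum>x1\<in>UNIV. \<Sum>x2\<in>UNIV. \<Sum>y\<in>UNIV. f x1 x2 y * ln (f x1 x2 y / (m12 f x1 x2 * mY f y)))" (is "_ = ?R")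
  by (simp add: I_12_Y_def mi_alt m12_def mY_def sumP)

lemma I1Y_form: "I_1Y f = (\<Sum>x1\<in>UNIV. \<Sum>x2\<in>UNIV. \<Sum>y\<in>UNIV. f x1 x2 y * ln (m1Y f x1 y / (m1 f x1 * mY f y)))" (is "_ = ?R")
proof -
  have e1: "(\<Sum>y'\<in>UNIV. m1Y f x1 y') = m1 f x1" for x1 unfolding m1Y_def m1_def by (rule sum.swap)
  have e2: "(\<Sum>x1'\<in>UNIV. m1Y f x1' y) = mY f y" for y by (simp add: m1Y_def mY_def)
  have "I_1Y f = (\<Sum>x1\<in>UNIV. \<Sum>y\<in>UNIV. m1Y f x1 y * ln (m1Y f x1 y / (m1 f x1 * mY f y)))"
    by (simp add: I_1Y_def mi_alt e1 e2)
  also have "\<dots> = (\<Sum>x1\<in>UNIV. \<Sum>y\<in>UNIV. \<Sum>x2\<in>UNIV. f x1 x2 y * ln (m1Y f x1 y / (m1 f x1 * mY f y)))"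
    by (intro sum.cong refl) (simp add: m1Y_def sum_distrib_right)
  also have "\<dots> = ?R" by (rule r132)
  finally show ?thesis .
qed

lemma I2Y_form: "I_2Y f = (\<Sum>x1\<in>UNIV. \<Sum>x2\<in>UNIV. \<Sum>y\<in>UNIV. f x1 x2 y * ln (m2Y f x2 y / (m2 f x2 * mY f y)))" (is "_ = ?R")
proof -
  have e1: "(\<Sum>y'\<in>UNIV. m2Y f x2 y') = m2 f x2" for x2 unfolding m2Y_def m2_def by (rule sum.swap)
  have e2: "(\<Sum>x2'\<in>UNIV. m2Y f x2' y) = mY f y" for y unfolding m2Y_def mY_def by (rule sum.swap)
  have "I_2Y f = (\<Sum>x2\<in>UNIV. \<Sum>y\<in>UNIV. m2Y f x2 y * ln (m2Y f x2 y / (m2 f x2 * mY f y)))"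
    by (simp add: I_2Y_def mi_alt e1 e2)
  also have "\<dots> = (\<Sum>x2\<in>UNIV. \<Sum>y\<in>UNIV. \<Sum>x1\<in>UNIV. f x1 x2 y * ln (m2Y f x2 y / (m2 f x2 * mY f y)))"
    by (intro sum.cong refl) (simp add: m2Y_def sum_distrib_right)
  also have "\<dots> = ?R" by (rule r231)
  finally show ?thesis .
qed

lemma I2Y1_form: "I_2Y_1 f = (\<Sum>x1\<in>UNIV. \<Sum>x2\<in>UNIV. \<Sum>y\<in>UNIV. f x1 x2 y * ln (f x1 x2 y * m1 f x1 / (m12 f x1 x2 * m1Y f x1 y)))" (is "_ = ?R")
proof -
  have "I_2Y_1 f = (\<Sum>x2\<in>UNIV. \<Sum>y\<in>UNIV. \<Sum>x1\<in>UNIV. f x1 x2 y * ln (f x1 x2 y * m1 f x1 / (m12 f x1 x2 * m1Y f x1 y)))"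
    by (simp add: I_2Y_1_def cmi_alt m1_def m12_def m1Y_def)
  also have "\<dots> = ?R" by (rule r231)
  finally show ?thesis .
qed

lemma I1Y2_form: "I_1Y_2 f = (\<Sum>x1\<in>UNIV. \<Sum>x2\<in>UNIV. \<Sum>y\<in>UNIV. f x1 x2 y * ln (f x1 x2 y * m2 f x2 / (m12 f x1 x2 * m2Y f x2 y)))" (is "_ = ?R")
proof -
  have "I_1Y_2 f = (\<Sum>x1\<in>UNIV. \<Sum>y\<in>UNIV. \<Sum>x2\<in>UNIV. f x1 x2 y * ln (f x1 x2 y * m2 f x2 / (m12 f x1 x2 * m2Y f x2 y)))"
    by (simp add: I_1Y_2_def cmi_alt m2_def m12_def m2Y_def)
  also have "\<dots> = ?R" by (rule r132)
  finally show ?thesis .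
qed

lemma I1_Y2_form: "I_1_Y2 f = (\<Sum>x1\<in>UNIV. \<Sum>x2\<in>UNIV. \<Sum>y\<in>UNIV. f x1 x2 y * ln (f x1 x2 y / (m1 f x1 * m2Y f x2 y)))" (is "_ = ?R")
proof -
  have e1: "(\<Sum>y\<in>UNIV. \<Sum>x2\<in>UNIV. f x1 x2 y) = m1 f x1" for x1 unfolding m1_def by (rule sum.swap)
  have "I_1_Y2 f = (\<Sum>x1\<in>UNIV. \<Sum>y\<in>UNIV. \<Sum>x2\<in>UNIV. f x1 x2 y * ln (f x1 x2 y / (m1 f x1 * m2Y f x2 y)))"
    by (simp add: I_1_Y2_def mi_alt sumP e1 m2Y_def)
  also have "\<dots> = ?R" by (rule r132)
  finally show ?thesis .
qed

lemma I12_form: "I_12 f = (\<Sum>x1\<in>UNIV. \<Sum>x2\<in>UNIV. \<Sum>y\<in>UNIV. f x1 x2 y * ln (m12 f x1 x2 / (m1 f x1 * m2 f x2)))" (is "_ = ?R")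
proof -
  have e1: "(\<Sum>x2\<in>UNIV. m12 f x1 x2) = m1 f x1" for x1 by (simp add: m12_def m1_def)
  have e2: "(\<Sum>x1\<in>UNIV. m12 f x1 x2) = m2 f x2" for x2 by (simp add: m12_def m2_def)
  have "I_12 f = (\<Sum>x1\<in>UNIV. \<Sum>x2\<in>UNIV. m12 f x1 x2 * ln (m12 f x1 x2 / (m1 f x1 * m2 f x2)))"
    by (simp add: I_12_def mi_alt e1 e2)
  also have "\<dots> = ?R"
    by (intro sum.cong refl) (simp add: m12_def sum_distrib_right)
  finally show ?thesis .
qed

end



lemma le_sum1: "(\<And>x. 0 \<le> g x) \<Longrightarrow> g a \<le> (\<Sum>x\<in>(UNIV::'a::finite set). (g x::real))"
  by (rule member_le_sum) auto

lemma r312: "(\<Sum>z\<in>C. \<Sum>x\<in>A. \<Sum>y\<in>B. g x y z) = (\<Sum>x\<in>A. \<Sum>y\<in>B. \<Sum>z\<in>C. g x y z)"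
proof -
  have "(\<Sum>z\<in>C. \<Sum>x\<in>A. \<Sum>y\<in>B. g x y z) = (\<Sum>x\<in>A. \<Sum>z\<in>C. \<Sum>y\<in>B. g x y z)" by (rule sum.swap)
  also have "\<dots> = (\<Sum>x\<in>A. \<Sum>y\<in>B. \<Sum>z\<in>C. g x y z)" by (rule r132)
  finally show ?thesis .
qed

lemma ln_term:
  fixes F A B C :: real
  assumes "0 \<le> F" "F > 0 \<Longrightarrow> A > 0 \<and> B > 0 \<and> C = A * B"
  shows "F * ln C = F * ln A + F * ln B"
proof (cases "F = 0")
  case False
  then have "A > 0" "B > 0" "C = A * B" using assms by auto
  then show ?thesis by (simp add: ln_mult algebra_simps)
qed simp

context
  fixes f :: "'a::finite \<Rightarrow> 'b::finite \<Rightarrow> 'c::finite \<Rightarrow> real"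
  assumes nn: "\<And>x1 x2 y. 0 \<le> f x1 x2 y"
begin

lemma marg_nn: "0 \<le> m12 f x1 x2" "0 \<le> m1Y f x1 y" "0 \<le> m2Y f x2 y" "0 \<le> m1 f x1" "0 \<le> m2 f x2" "0 \<le> mY f y"
  by (auto simp: m12_def m1Y_def m2Y_def m1_def m2_def mY_def nn intro!: sum_nonneg)

lemma marg_pos:
  assumes "f x1 x2 y > 0"
  shows "m12 f x1 x2 > 0" "m1Y f x1 y > 0" "m2Y f x2 y > 0" "m1 f x1 > 0" "m2 f x2 > 0" "mY f y > 0"
proof -
  have a: "f x1 x2 y \<le> m12 f x1 x2" unfolding m12_def by (rule le_sum1) (rule nn)
  have b: "f x1 x2 y \<le> m1Y f x1 y" unfolding m1Y_def by (rule le_sum1[where g="\<lambda>x2. f x1 x2 y"]) (rule nn)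
  have c: "f x1 x2 y \<le> m2Y f x2 y" unfolding m2Y_def by (rule le_sum1[where g="\<lambda>x1. f x1 x2 y"]) (rule nn)
  have d: "m12 f x1 x2 \<le> m1 f x1" unfolding m1_def m12_def[symmetric]
    by (rule le_sum1[where g="\<lambda>x2. m12 f x1 x2"]) (rule marg_nn)
  have e: "m12 f x1 x2 \<le> m2 f x2" unfolding m2_def m12_def[symmetric]
    by (rule le_sum1[where g="\<lambda>x1. m12 f x1 x2"]) (rule marg_nn)
  have g: "m1Y f x1 y \<le> mY f y" unfolding mY_def m1Y_def[symmetric]
    by (rule le_sum1[where g="\<lambda>x1. m1Y f x1 y"]) (rule marg_nn)
  show "m12 f x1 x2 > 0" "m1Y f x1 y > 0" "m2Y f x2 y > 0" "m1 f x1 > 0" "m2 f x2 > 0" "mY f y > 0"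
    using assms a b c d e g by linarith+
qed

lemma chain1: "I_12_Y f = I_1Y f + I_2Y_1 f"
proof -
  have "I_1Y f + I_2Y_1 f = (\<Sum>x1\<in>UNIV. \<Sum>x2\<in>UNIV. \<Sum>y\<in>UNIV.
     f x1 x2 y * ln (m1Y f x1 y / (m1 f x1 * mY f y)) + f x1 x2 y * ln (f x1 x2 y * m1 f x1 / (m12 f x1 x2 * m1Y f x1 y)))"
    by (simp add: I1Y_form I2Y1_form sum.distrib)
  also have "\<dots> = I_12_Y f" unfolding I12Y_form
    apply (intro sum.cong refl)
    apply (rule ln_term[symmetric, OF nn])
    apply (frule marg_pos(1), frule marg_pos(2), frule marg_pos(4), frule marg_pos(6))
    apply (simp add: field_simps)
    done
  finally show ?thesis ..
qed

lemma chain2: "I_12_Y f = I_2Y f + I_1Y_2 f"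
proof -
  have "I_2Y f + I_1Y_2 f = (\<Sum>x1\<in>UNIV. \<Sum>x2\<in>UNIV. \<Sum>y\<in>UNIV.
     f x1 x2 y * ln (m2Y f x2 y / (m2 f x2 * mY f y)) + f x1 x2 y * ln (f x1 x2 y * m2 f x2 / (m12 f x1 x2 * m2Y f x2 y)))"
    by (simp add: I2Y_form I1Y2_form sum.distrib)
  also have "\<dots> = I_12_Y f" unfolding I12Y_form
    apply (intro sum.cong refl)
    apply (rule ln_term[symmetric, OF nn])
    apply (frule marg_pos(1), frule marg_pos(3), frule marg_pos(5), frule marg_pos(6))
    apply (simp add: field_simps)
    done
  finally show ?thesis ..
qed

lemma chain3: "I_1_Y2 f = I_12 f + I_1Y_2 f"
proof -
  have "I_12 f + I_1Y_2 f = (\<Sum>x1\<in>UNIV. \<Sum>x2\<in>UNIV. \<Sum>y\<in>UNIV.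
     f x1 x2 y * ln (m12 f x1 x2 / (m1 f x1 * m2 f x2)) + f x1 x2 y * ln (f x1 x2 y * m2 f x2 / (m12 f x1 x2 * m2Y f x2 y)))"
    by (simp add: I12_form I1Y2_form sum.distrib)
  also have "\<dots> = I_1_Y2 f" unfolding I1_Y2_form
    apply (intro sum.cong refl)
    apply (rule ln_term[symmetric, OF nn])
    apply (frule marg_pos(1), frule marg_pos(3), frule marg_pos(5), frule marg_pos(4))
    apply (simp add: field_simps)
    done
  finally show ?thesis ..
qed

lemma total_mY: "(\<Sum>x1\<in>UNIV. \<Sum>x2\<in>UNIV. \<Sum>y\<in>UNIV. f x1 x2 y) = (\<Sum>y\<in>UNIV. mY f y)"
  unfolding mY_def by (rule r312[symmetric])

lemma gibbs:
  assumes tot: "(\<Sum>x1\<in>UNIV. \<Sum>x2\<in>UNIV. \<Sum>y\<in>UNIV. f x1 x2 y) = 1"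
    and ind: "\<And>x1 x2. m12 f x1 x2 = m1 f x1 * m2 f x2"
  shows "I_1Y f + I_2Y f \<le> I_12_Y f"
proof -
  define r where "r x1 x2 y = m1Y f x1 y * m2Y f x2 y / mY f y" for x1 x2 y
  have r0: "0 \<le> r x1 x2 y" for x1 x2 y unfolding r_def using marg_nn by simp
  have "I_12_Y f - (I_1Y f + I_2Y f) = (\<Sum>x1\<in>UNIV. \<Sum>x2\<in>UNIV. \<Sum>y\<in>UNIV.
     f x1 x2 y * ln (f x1 x2 y / (m12 f x1 x2 * mY f y)) - (f x1 x2 y * ln (m1Y f x1 y / (m1 f x1 * mY f y))
       + f x1 x2 y * ln (m2Y f x2 y / (m2 f x2 * mY f y))))"
    by (simp add: I1Y_form I2Y_form I12Y_form sum.distrib sum_subtractf)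
  also have "\<dots> \<ge> (\<Sum>x1\<in>UNIV. \<Sum>x2\<in>UNIV. \<Sum>y\<in>UNIV. f x1 x2 y - r x1 x2 y)"
  proof (intro sum_mono)
    fix x1 x2 y
    show "f x1 x2 y - r x1 x2 y \<le> f x1 x2 y * ln (f x1 x2 y / (m12 f x1 x2 * mY f y)) - (f x1 x2 y * ln (m1Y f x1 y / (m1 f x1 * mY f y))
       + f x1 x2 y * ln (m2Y f x2 y / (m2 f x2 * mY f y)))"
    proof (cases "f x1 x2 y = 0")
      case True then show ?thesis using r0[of x1 x2 y] by simp
    next
      case False
      then have F: "f x1 x2 y > 0" using nn[of x1 x2 y] by simp
      note p = marg_pos[OF F]
      have rp: "r x1 x2 y > 0" unfolding r_def using p by simp
      have "f x1 x2 y * ln (f x1 x2 y / (m12 f x1 x2 * mY f y)) = f x1 x2 y * ln (f x1 x2 y / r x1 x2 y)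
           + (f x1 x2 y * ln (m1Y f x1 y / (m1 f x1 * mY f y)) + f x1 x2 y * ln (m2Y f x2 y / (m2 f x2 * mY f y)))"
      proof -
        have "f x1 x2 y * ln (f x1 x2 y / (m12 f x1 x2 * mY f y)) = f x1 x2 y * ln (f x1 x2 y / r x1 x2 y)
           + f x1 x2 y * ln ((m1Y f x1 y / (m1 f x1 * mY f y)) * (m2Y f x2 y / (m2 f x2 * mY f y)))"
          apply (rule ln_term[OF nn])
          using p rp F ind[of x1 x2] by (auto simp: r_def field_simps)
        also have "ln ((m1Y f x1 y / (m1 f x1 * mY f y)) * (m2Y f x2 y / (m2 f x2 * mY f y)))
           = ln (m1Y f x1 y / (m1 f x1 * mY f y)) + ln (m2Y f x2 y / (m2 f x2 * mY f y))"
          using p by (subst ln_mult) auto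
        finally show ?thesis by (simp add: algebra_simps)
      qed
      moreover have "f x1 x2 y - r x1 x2 y \<le> f x1 x2 y * ln (f x1 x2 y / r x1 x2 y)"
        using gibbs_term[of "f x1 x2 y" "r x1 x2 y"] nn r0 rp by simp
      ultimately show ?thesis by simp
    qed
  qed
  also have "(\<Sum>x1\<in>UNIV. \<Sum>x2\<in>UNIV. \<Sum>y\<in>UNIV. f x1 x2 y - r x1 x2 y) = 1 - (\<Sum>x1\<in>UNIV. \<Sum>x2\<in>UNIV. \<Sum>y\<in>UNIV. r x1 x2 y)"
    using tot by (simp add: sum_subtractf)
  also have "(\<Sum>x1\<in>UNIV. \<Sum>x2\<in>UNIV. \<Sum>y\<in>UNIV. r x1 x2 y) = (\<Sum>y\<in>UNIV. \<Sum>x1\<in>UNIV. \<Sum>x2\<in>UNIV. r x1 x2 y)"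
    by (rule r312[symmetric])
  also have "\<dots> = (\<Sum>y\<in>UNIV. mY f y)"
  proof (intro sum.cong refl)
    fix y
    have s1: "(\<Sum>x1\<in>UNIV. m1Y f x1 y) = mY f y" by (simp add: m1Y_def mY_def)
    have s2: "(\<Sum>x2\<in>UNIV. m2Y f x2 y) = mY f y" unfolding m2Y_def mY_def by (rule sum.swap)
    have "(\<Sum>x1\<in>UNIV. \<Sum>x2\<in>UNIV. r x1 x2 y) = (\<Sum>x1\<in>UNIV. m1Y f x1 y) * (\<Sum>x2\<in>UNIV. m2Y f x2 y) / mY f y"
      by (simp add: r_def sum_product sum_divide_distrib)
    also have "\<dots> = mY f y" using s1 s2 by (cases "mY f y = 0") auto
    finally show "(\<Sum>x1\<in>UNIV. \<Sum>x2\<in>UNIV. r x1 x2 y) = mY f y" .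
  qed
  also have "\<dots> = 1" using tot total_mY by simp
  finally show ?thesis by simp
qed

end



lemma mi_prod:
  fixes \<alpha> :: "'u::finite \<Rightarrow> real" and \<beta> :: "'v::finite \<Rightarrow> real"
  assumes "(\<Sum>u\<in>UNIV. \<alpha> u) = 1" "(\<Sum>v\<in>UNIV. \<beta> v) = 1"
  shows "mi (\<lambda>u v. \<alpha> u * \<beta> v) = 0"
proof -
  have "mi (\<lambda>u v. \<alpha> u * \<beta> v) = (\<Sum>u\<in>UNIV. \<Sum>v\<in>UNIV. \<alpha> u * \<beta> v * ln (\<alpha> u * \<beta> v / (\<alpha> u * \<beta> v)))"
    by (simp add: mi_alt sum_distrib_left[symmetric] sum_distrib_right[symmetric] assms)
  also have "\<dots> = 0"
  proof -
    have z: "x * ln (x / x) = 0" for x :: real by (cases "x = 0") auto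
    show ?thesis by (auto intro!: sum.neutral)
  qed
  finally show ?thesis .
qed

lemma cont_term:
  fixes a b c :: real
  assumes "0 \<le> a" "0 \<le> b" "a > 0 \<Longrightarrow> c > 0" "b > 0 \<Longrightarrow> c > 0"
  shows "continuous_on {0..1} (\<lambda>t. ((1-t)*a+t*b) * ln (((1-t)*a+t*b) / c))"
proof (cases "c > 0")
  case True
  have eq: "q * ln (q / c) = q * ln q - q * ln c" if "0 \<le> q" for q
  proof (cases "q = 0")
    case False then show ?thesis using that True by (simp add: ln_div algebra_simps)
  qed simp
  have nnq: "0 \<le> (1-t)*a+t*b" if "t \<in> {0..1}" for t using that assms by auto
  have "continuous_on {0..1} (\<lambda>t. ((1-t)*a+t*b) * ln ((1-t)*a+t*b) - ((1-t)*a+t*b) * ln c)"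
  proof (rule continuous_on_diff)
    show "continuous_on {0..1} (\<lambda>t. ((1-t)*a+t*b) * ln c)" by (intro continuous_intros)
    show "continuous_on {0..1} (\<lambda>t. ((1-t)*a+t*b) * ln ((1-t)*a+t*b))"
      by (rule continuous_on_compose2[OF xlnx_cont, where f="\<lambda>t. (1-t)*a+t*b"])
         (auto intro!: continuous_intros simp: nnq)
  qed
  then show ?thesis by (rule continuous_on_eq) (auto simp: eq nnq)
next
  case False
  then have "a = 0" "b = 0" using assms by force+
  then show ?thesis by simp
qed

lemma m1Y_sum1: "(\<Sum>y\<in>UNIV. m1Y f x1 y) = m1 f x1" unfolding m1Y_def m1_def by (rule sum.swap)
lemma m1Y_sum2: "(\<Sum>x1\<in>UNIV. m1Y f x1 y) = mY f y" by (simp add: m1Y_def mY_def)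
lemma m1_m12: "m1 f x1 = (\<Sum>x2\<in>UNIV. m12 f x1 x2)" by (simp add: m12_def m1_def)
lemma m2_m12: "m2 f x2 = (\<Sum>x1\<in>UNIV. m12 f x1 x2)" by (simp add: m12_def m2_def)

definition seg :: "real \<Rightarrow> ('a::finite \<Rightarrow> 'b::finite \<Rightarrow> 'c::finite \<Rightarrow> real) \<Rightarrow> ('a \<Rightarrow> 'b \<Rightarrow> 'c \<Rightarrow> real) \<Rightarrow> ('a \<Rightarrow> 'b \<Rightarrow> 'c \<Rightarrow> real)"
  where "seg t f g = (\<lambda>x1 x2 y. (1-t) * f x1 x2 y + t * g x1 x2 y)"

lemma seg_m12: "m12 (seg t f g) x1 x2 = (1-t) * m12 f x1 x2 + t * m12 g x1 x2"
  by (simp add: seg_def m12_def sum.distrib sum_distrib_left)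
lemma seg_m1Y: "m1Y (seg t f g) x1 y = (1-t) * m1Y f x1 y + t * m1Y g x1 y"
  by (simp add: seg_def m1Y_def sum.distrib sum_distrib_left)
lemma seg_mY: "mY (seg t f g) y = (1-t) * mY f y + t * mY g y"
  by (simp add: seg_def mY_def sum.distrib sum_distrib_left)
lemma seg_Eq: "Eq q (seg t f g) = (1-t) * Eq q f + t * Eq q g"
proof -
  have "Eq q (seg t f g) = (\<Sum>x1\<in>UNIV. \<Sum>x2\<in>UNIV. \<Sum>y\<in>UNIV. (1-t) * (f x1 x2 y * q x1 x2 y) + t * (g x1 x2 y * q x1 x2 y))"
    by (simp add: Eq_def seg_def distrib_right mult.assoc)
  also have "\<dots> = (1-t) * Eq q f + t * Eq q g"
    by (simp add: Eq_def sum.distrib sum_distrib_left)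
  finally show ?thesis .
qed
lemma seg_pmf3: "pmf3 f \<Longrightarrow> pmf3 g \<Longrightarrow> 0 \<le> t \<Longrightarrow> t \<le> 1 \<Longrightarrow> pmf3 (seg t f g)"
  by (simp add: pmf3_def seg_def sum.distrib sum_distrib_left[symmetric])

context
  fixes f g :: "'a::finite \<Rightarrow> 'b::finite \<Rightarrow> 'c::finite \<Rightarrow> real"
  assumes pf: "pmf3 f" and pg: "pmf3 g"
    and e12: "m12 g = m12 f" and eY: "mY g = mY f"
begin

lemma nnf: "0 \<le> f x1 x2 y" using pf by (simp add: pmf3_def)
lemma nng: "0 \<le> g x1 x2 y" using pg by (simp add: pmf3_def)

lemma seg_m12': "m12 (seg t f g) = m12 f"
  by (rule ext)+ (simp add: seg_m12 e12 algebra_simps)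
lemma seg_mY': "mY (seg t f g) = mY f"
  by (rule ext)+ (simp add: seg_mY eY algebra_simps)
lemma seg_m1': "m1 (seg t f g) = m1 f"
  by (rule ext) (simp add: m1_m12 seg_m12')

lemma I12Y_convex:
  assumes "0 \<le> t" "t \<le> 1"
  shows "I_12_Y (seg t f g) \<le> (1-t) * I_12_Y f + t * I_12_Y g"
proof -
  have "I_12_Y (seg t f g) = (\<Sum>x1\<in>UNIV. \<Sum>x2\<in>UNIV. \<Sum>y\<in>UNIV.
      ((1-t) * f x1 x2 y + t * g x1 x2 y) * ln (((1-t) * f x1 x2 y + t * g x1 x2 y) / (m12 f x1 x2 * mY f y)))"
    by (simp add: I12Y_form seg_m12' seg_mY') (simp add: seg_def)
  also have "\<dots> \<le> (\<Sum>x1\<in>UNIV. \<Sum>x2\<in>UNIV. \<Sum>y\<in>UNIV.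
      (1-t) * (f x1 x2 y * ln (f x1 x2 y / (m12 f x1 x2 * mY f y))) + t * (g x1 x2 y * ln (g x1 x2 y / (m12 f x1 x2 * mY f y))))"
  proof (intro sum_mono conv_term)
    fix x1 x2 y
    show "0 \<le> f x1 x2 y" "0 \<le> g x1 x2 y" by (rule nnf, rule nng)
    show "0 < m12 f x1 x2 * mY f y" if "0 < f x1 x2 y"
      using marg_pos[of f x1 x2 y, OF nnf that] by simp
    show "0 < m12 f x1 x2 * mY f y" if "0 < g x1 x2 y"
      using marg_pos[of g x1 x2 y, OF nng that] by (simp add: e12 eY)
  qed (use assms in auto)
  also have "\<dots> = (1-t) * I_12_Y f + t * I_12_Y g"
    by (simp add: I12Y_form e12 eY sum.distrib sum_distrib_left)
  finally show ?thesis .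
qed

lemma I1Y_cont: "continuous_on {0..1} (\<lambda>t. I_1Y (seg t f g))"
proof -
  have e1: "(\<Sum>y\<in>UNIV. m1Y g x1 y) = m1 f x1" for x1 by (simp add: m1Y_sum1 m1_m12 e12)
  have e2: "(\<Sum>x1\<in>UNIV. m1Y g x1 y) = mY f y" for y by (simp add: m1Y_sum2 eY)
  have "I_1Y (seg t f g) = (\<Sum>x1\<in>UNIV. \<Sum>y\<in>UNIV. ((1-t) * m1Y f x1 y + t * m1Y g x1 y) *
       ln (((1-t) * m1Y f x1 y + t * m1Y g x1 y) / (m1 f x1 * mY f y)))" for t
    by (simp add: I_1Y_def mi_alt m1Y_sum1 m1Y_sum2 seg_m1' seg_mY') (simp add: seg_m1Y)
  moreover have "continuous_on {0..1} (\<lambda>t. \<Sum>x1\<in>UNIV. \<Sum>y\<in>UNIV. ((1-t) * m1Y f x1 y + t * m1Y g x1 y) *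
       ln (((1-t) * m1Y f x1 y + t * m1Y g x1 y) / (m1 f x1 * mY f y)))"
  proof (intro continuous_on_sum cont_term)
    fix x1 y
    show "0 \<le> m1Y f x1 y" "0 \<le> m1Y g x1 y" using marg_nn nnf nng by blast+
    show "0 < m1 f x1 * mY f y" if "0 < m1Y f x1 y"
    proof -
      have "\<exists>x2. 0 < f x1 x2 y"
      proof (rule ccontr)
        assume "\<not> ?thesis"
        then have "m1Y f x1 y \<le> 0" unfolding m1Y_def by (auto intro: sum_nonpos simp: not_less)
        then show False using that by simp
      qed
      then obtain x2 where "f x1 x2 y > 0" by blast
      from marg_pos[of f x1 x2 y, OF nnf this] show ?thesis by simp
    qed
    show "0 < m1 f x1 * mY f y" if "0 < m1Y g x1 y"
    proof -
      have "\<exists>x2. 0 < g x1 x2 y"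
      proof (rule ccontr)
        assume "\<not> ?thesis"
        then have "m1Y g x1 y \<le> 0" unfolding m1Y_def by (auto intro: sum_nonpos simp: not_less)
        then show False using that by simp
      qed
      then obtain x2 where "g x1 x2 y > 0" by blast
      from marg_pos[of g x1 x2 y, OF nng this] show ?thesis
        by (metis e12 eY m1_m12 mult_pos_pos)
    qed
  qed
  ultimately show ?thesis by simp
qed

end



context
  fixes W :: "'a::finite \<Rightarrow> 'b::finite \<Rightarrow> 'c::finite \<Rightarrow> real"
    and P1 :: "'a \<Rightarrow> real" and P2 :: "'b \<Rightarrow> real"
  assumes ch: "channel W" and p1: "pmf1 P1" and p2: "pmf1 P2"
begin

abbreviation "PP \<equiv> (\<lambda>x1 x2 y. P1 x1 * P2 x2 * W x1 x2 y)"

lemma W1: "(\<Sum>y\<in>UNIV. W x1 x2 y) = 1" "0 \<le> W x1 x2 y"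
  using ch by (auto simp: channel_def pmf1_def)
lemma P1s: "(\<Sum>x\<in>UNIV. P1 x) = 1" "0 \<le> P1 x" using p1 by (auto simp: pmf1_def)
lemma P2s: "(\<Sum>x\<in>UNIV. P2 x) = 1" "0 \<le> P2 x" using p2 by (auto simp: pmf1_def)

lemma PP_m12: "m12 PP x1 x2 = P1 x1 * P2 x2"
  by (simp add: m12_def sum_distrib_left[symmetric] W1)

lemma PP_pmf3: "pmf3 PP"
proof -
  have "(\<Sum>x1\<in>UNIV. \<Sum>x2\<in>UNIV. \<Sum>y\<in>UNIV. PP x1 x2 y) = (\<Sum>x1\<in>UNIV. \<Sum>x2\<in>UNIV. m12 PP x1 x2)"
    by (simp add: m12_def)
  also have "\<dots> = 1" by (simp add: PP_m12 sum_distrib_left[symmetric] sum_distrib_right[symmetric] P1s P2s)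
  finally show ?thesis unfolding pmf3_def using W1 P1s P2s by auto
qed

context
  fixes f :: "'a \<Rightarrow> 'b \<Rightarrow> 'c \<Rightarrow> real"
  assumes fm: "m12 f = m12 PP"
begin

lemma f_m12: "m12 f x1 x2 = P1 x1 * P2 x2" by (simp add: fm PP_m12)
lemma f_m1: "m1 f x1 = P1 x1" by (simp add: m1_m12 f_m12 sum_distrib_left[symmetric] P2s)
lemma f_m2: "m2 f x2 = P2 x2" by (simp add: m2_m12 f_m12 sum_distrib_right[symmetric] P1s)
lemma f_ind: "m12 f x1 x2 = m1 f x1 * m2 f x2" by (simp add: f_m12 f_m1 f_m2)
lemma f_I12: "I_12 f = 0"
proof -
  have "m12 f = (\<lambda>x1 x2. P1 x1 * P2 x2)" by (rule ext)+ (rule f_m12)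
  then show ?thesis unfolding I_12_def using mi_prod[OF P1s(1) P2s(1)] by simp
qed
lemma f_I21: "I_21 f = 0"
proof -
  have "(\<lambda>x2 x1. m12 f x1 x2) = (\<lambda>x2 x1. P2 x2 * P1 x1)" by (rule ext)+ (simp add: f_m12)
  then show ?thesis unfolding I_21_def using mi_prod[OF P2s(1) P1s(1)] by simp
qed

end

lemma D0I:
  assumes "pmf3 h" "m12 h = m12 PP" "mY h = mY PP" "Eq q PP \<le> Eq q h" "I_1Y h \<le> R1" "I_2Y h \<le> R2"
  shows "h \<in> D0 q PP R1 R2"
proof -
  have "m1 h = m1 PP" "m2 h = m2 PP" by (rule ext, simp add: m1_m12 m2_m12 assms(2))+
  then show ?thesis using assms unfolding D0_def by simp
qed

lemma key:
  assumes h3: "\<And>h. h \<in> D0 q PP R1 R2 \<Longrightarrow> R1 + R2 < I_12_Y h + I_12 h"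
    and fL: "f \<in> L0 q PP" and fI: "I_1Y f + max 0 (I_2Y_1 f - R2) < R1"
    and gL: "g \<in> L0 q PP" and gI: "I_2Y g - I_21 g + max 0 (I_1_Y2 g - R1) < R2"
  shows False
proof -
  from fL have pf: "pmf3 f" and f12: "m12 f = m12 PP" and fE: "Eq q PP \<le> Eq q f" and fY: "mY f = mY PP"
    by (auto simp: L0_def Gq_def)
  from gL have pg: "pmf3 g" and g12: "m12 g = m12 PP" and gE: "Eq q PP \<le> Eq q g" and gY: "mY g = mY PP"
    by (auto simp: L0_def Gq_def)
  have nnf: "\<And>x1 x2 y. 0 \<le> f x1 x2 y" using pf by (simp add: pmf3_def)
  have nng: "\<And>x1 x2 y. 0 \<le> g x1 x2 y" using pg by (simp add: pmf3_def)
  have f1: "I_1Y f < R1" using fI by linarith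
  have f2: "I_12_Y f < R1 + R2" using fI chain1[of f, OF nnf] by linarith
  have g21: "I_21 g = 0" by (rule f_I21[OF g12])
  have g12': "I_12 g = 0" by (rule f_I12[OF g12])
  have g3: "I_1_Y2 g = I_1Y_2 g" using chain3[of g, OF nng] g12' by simp
  have g2: "I_2Y g < R2" using gI g21 by linarith
  have gtot: "I_12_Y g < R1 + R2" using gI g21 g3 chain2[of g, OF nng] by linarith
  have g1: "R1 < I_1Y g"
  proof (rule ccontr)
    assume "\<not> R1 < I_1Y g"
    then have "g \<in> D0 q PP R1 R2" using D0I[OF pg g12 gY gE] g2 by simp
    from h3[OF this] gtot g12' show False by simp
  qed
  have e12: "m12 g = m12 f" and eY: "mY g = mY f" using f12 g12 fY gY by simp_all
  have s0: "seg 0 f g = f" "seg 1 f g = g" by (simp_all add: seg_def)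
  obtain t where t: "0 \<le> t" "t \<le> 1" "I_1Y (seg t f g) = R1"
    using IVT'[of "\<lambda>t. I_1Y (seg t f g)" 0 R1 1] f1 g1 I1Y_cont[OF pf pg e12 eY] s0 by auto
  define h where "h = seg t f g"
  have ph: "pmf3 h" unfolding h_def by (rule seg_pmf3[OF pf pg t(1,2)])
  have h12: "m12 h = m12 PP" unfolding h_def using seg_m12'[OF pf pg e12 eY] f12 by simp
  have hY: "mY h = mY PP" unfolding h_def using seg_mY'[OF pf pg e12 eY] fY by simp
  have hE: "Eq q PP \<le> Eq q h"
  proof -
    have "Eq q PP = (1-t) * Eq q PP + t * Eq q PP" by (simp add: algebra_simps)
    also have "\<dots> \<le> (1-t) * Eq q f + t * Eq q g"
      using fE gE t by (intro add_mono mult_left_mono) auto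
    finally show ?thesis by (simp add: h_def seg_Eq)
  qed
  have hI: "I_12_Y h < R1 + R2"
  proof -
    have "I_12_Y h \<le> (1-t) * I_12_Y f + t * I_12_Y g"
      unfolding h_def by (rule I12Y_convex[OF pf pg e12 eY t(1,2)])
    also have "\<dots> < R1 + R2"
    proof (cases "t = 0")
      case True then show ?thesis using f2 by simp
    next
      case False
      then have "t > 0" using t by simp
      then have "t * I_12_Y g < t * (R1 + R2)" using gtot by simp
      moreover have "(1-t) * I_12_Y f \<le> (1-t) * (R1 + R2)" using f2 t by (intro mult_left_mono) auto
      ultimately show ?thesis by (simp add: algebra_simps)
    qed
    finally show ?thesis .
  qed
  have nnh: "\<And>x1 x2 y. 0 \<le> h x1 x2 y" using ph by (simp add: pmf3_def)
  have tot: "(\<Sum>x1\<in>UNIV. \<Sum>x2\<in>UNIV. \<Sum>y\<in>UNIV. h x1 x2 y) = 1" using ph by (simp add: pmf3_def)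
  have "I_1Y h + I_2Y h \<le> I_12_Y h" by (rule gibbs[of h, OF nnh tot f_ind[OF h12]])
  then have "I_2Y h \<le> R2" using hI t(3) unfolding h_def by simp
  then have "h \<in> D0 q PP R1 R2" using D0I[OF ph h12 hY hE] t(3) unfolding h_def by simp
  from h3[OF this] hI f_I12[OF h12] show False by simp
qed

lemma RLM_P_sub: "RLM_P q PP \<subseteq> Rcog_star q PP"
proof
  fix z assume "z \<in> RLM_P q PP"
  note mem = this
  obtain R1 R2 where z: "z = (R1, R2)" by (cases z)
  have H: "0 \<le> R1 \<and> 0 \<le> R2 \<and> ereal R1 < (INF f\<in>D1 q PP. ereal (I_1Y_2 f + I_12 f)) \<and>
      ereal R2 < (INF f\<in>D2 q PP. ereal (I_2Y_1 f + I_12 f)) \<and>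
      ereal (R1 + R2) < (INF f\<in>D0 q PP R1 R2. ereal (I_12_Y f + I_12 f))"
    using mem unfolding RLM_P_def z by simp
  then have r1: "0 \<le> R1" and r2: "0 \<le> R2"
    and h1: "ereal R1 < (INF f\<in>D1 q PP. ereal (I_1Y_2 f + I_12 f))"
    and h2: "ereal R2 < (INF f\<in>D2 q PP. ereal (I_2Y_1 f + I_12 f))"
    and h3: "ereal (R1 + R2) < (INF f\<in>D0 q PP R1 R2. ereal (I_12_Y f + I_12 f))"
    by blast+
  have h1': "R1 < I_1Y_2 f + I_12 f" if "f \<in> D1 q PP" for f
    using order.strict_trans2[OF h1 INF_lower[OF that]] by simp
  have h2': "R2 < I_2Y_1 f + I_12 f" if "f \<in> D2 q PP" for f
    using order.strict_trans2[OF h2 INF_lower[OF that]] by simp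
  have h3': "R1 + R2 < I_12_Y f + I_12 f" if "f \<in> D0 q PP R1 R2" for f
    using order.strict_trans2[OF h3 INF_lower[OF that]] by simp
  have a: "ereal R1 \<le> R1' q PP"
    unfolding R1'_def
  proof (rule INF_greatest)
    fix f assume "f \<in> L1 q PP"
    then have pf: "pmf3 f" and f12: "m12 f = m12 PP" and fE: "Eq q PP \<le> Eq q f" and f2Y: "m2Y f = m2Y PP"
      by (auto simp: L1_def Gq_def)
    have "m1 f = m1 PP" by (rule ext) (simp add: m1_m12 f12)
    then have "f \<in> D1 q PP" using pf f2Y fE by (simp add: D1_def)
    from h1'[OF this] have "R1 < I_1Y_2 f + I_12 f" .
    moreover have "I_1_Y2 f = I_12 f + I_1Y_2 f" by (rule chain3) (use pf in \<open>simp add: pmf3_def\<close>)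
    ultimately show "ereal R1 \<le> ereal (I_1_Y2 f)" by simp
  qed
  have b: "ereal (0 + R2) \<le> R2' q PP"
    unfolding R2'_def
  proof (rule INF_greatest)
    fix f assume "f \<in> L2 q PP"
    then have pf: "pmf3 f" and f12: "m12 f = m12 PP" and fE: "Eq q PP \<le> Eq q f" and f1Y: "m1Y f = m1Y PP"
      by (auto simp: L2_def Gq_def)
    have "m2 f = m2 PP" by (rule ext) (simp add: m2_m12 f12)
    then have "f \<in> D2 q PP" using pf f1Y fE by (simp add: D2_def)
    from h2'[OF this] f_I12[OF f12] show "ereal (0 + R2) \<le> ereal (I_2Y_1 f)" by simp
  qed
  have c: "ereal R1 \<le> R1'' q PP (0 + R2) \<or> ereal (0 + R2) \<le> R2'' q PP R1"
  proof (rule ccontr)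
    assume "\<not> ?thesis"
    then have l1: "R1'' q PP (0 + R2) < ereal R1" and l2: "R2'' q PP R1 < ereal (0 + R2)" by (simp_all add: not_le)
    from l1 obtain f where fL: "f \<in> L0 q PP" and fI: "ereal (I_1Y f + max 0 (I_2Y_1 f - (0 + R2))) < ereal R1"
      unfolding R1''_def INF_less_iff by blast
    from l2 obtain g where gL: "g \<in> L0 q PP" and gI: "ereal (I_2Y g - I_21 g + max 0 (I_1_Y2 g - R1)) < ereal (0 + R2)"
      unfolding R2''_def INF_less_iff by blast
    show False by (rule key[OF h3' fL _ gL]) (use fI gI in simp_all)
  qed
  show "z \<in> Rcog_star q PP"
    unfolding z Rcog_star_def
    apply (simp only: mem_Collect_eq prod.case)
    apply (rule conjI, rule r2)
    apply (rule exI[where x=R1], rule exI[where x=0])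
    using r1 a b c by simp
qed

end

theorem lemma2:
  fixes W :: "'a::finite \<Rightarrow> 'b::finite \<Rightarrow> 'c::finite \<Rightarrow> real"
    and q :: "'a \<Rightarrow> 'b \<Rightarrow> 'c \<Rightarrow> real"
  assumes "channel W"
  shows "RLM q W \<subseteq> Rcog_bin q W"
  unfolding RLM_def Rcog_bin_def
proof (intro closure_mono hull_mono Union_least)
  fix S assume "S \<in> {RLM_P q P | P. \<exists>P1 P2. pmf1 P1 \<and> pmf1 P2 \<and> P = (\<lambda>x1 x2 y. P1 x1 * P2 x2 * W x1 x2 y)}"
  then obtain P where SP: "S = RLM_P q P" and "\<exists>P1 P2. pmf1 P1 \<and> pmf1 P2 \<and> P = (\<lambda>x1 x2 y. P1 x1 * P2 x2 * W x1 x2 y)"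
    by blast
  then obtain P1 P2 where p1: "pmf1 P1" and p2: "pmf1 P2" and PE: "P = (\<lambda>x1 x2 y. P1 x1 * P2 x2 * W x1 x2 y)"
    by blast
  have S: "S = RLM_P q (\<lambda>x1 x2 y. P1 x1 * P2 x2 * W x1 x2 y)" using SP PE by simp
  define PX where "PX = (\<lambda>x1 x2. P1 x1 * P2 x2)"
  have s1: "(\<Sum>x\<in>UNIV. P1 x) = 1" "\<And>x. 0 \<le> P1 x" using p1 by (simp_all add: pmf1_def)
  have s2: "(\<Sum>x\<in>UNIV. P2 x) = 1" "\<And>x. 0 \<le> P2 x" using p2 by (simp_all add: pmf1_def)
  have "(\<Sum>x1\<in>UNIV. \<Sum>x2\<in>UNIV. P1 x1 * P2 x2) = 1"
    using s1 s2 by (simp add: sum_product[symmetric])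
  then have "pmf2 PX" using s1 s2 unfolding pmf2_def PX_def by simp
  then have "Rcog_star q (\<lambda>x1 x2 y. P1 x1 * P2 x2 * W x1 x2 y) \<in>
     {Rcog_star q P | P. \<exists>PX. pmf2 PX \<and> P = (\<lambda>x1 x2 y. PX x1 x2 * W x1 x2 y)}"
    unfolding PX_def by blast
  moreover have "S \<subseteq> Rcog_star q (\<lambda>x1 x2 y. P1 x1 * P2 x2 * W x1 x2 y)"
    unfolding S by (rule RLM_P_sub[OF assms p1 p2])
  ultimately show "S \<subseteq> \<Union>{Rcog_star q P | P. \<exists>PX. pmf2 PX \<and> P = (\<lambda>x1 x2 y. PX x1 x2 * W x1 x2 y)}"
    by blast
qed


end
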